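(* Let $m\ge1$ and let $W$ be a B-DMC. For $n\ge1$ let $E[J_n]=\frac{1}{N(n)}\sum_{\mathbf s\in\mathcal S_n}J(W_{\mathbf s})$, and for $n\le0$ let $E[J_n]=J(W)$. Then for every $n\ge1$, with $\mu=N(n-1)/N(n)$ (so $1-\mu=N(n-m)/N(n)$), $$E[J_n]\ \ge\ \mu\,E[J_{n-1}]+(1-\mu)\,E[J_{n-m}],$$ and equality holds only if, for every $\mathbf s=(s_1,\dots,s_n)\in\mathcal S_n$ with $s_n\in\{+,-\}$, one has $J(W_{(s_1,\dots,s_{n-1})})\in\{0,1\}$ or $J(W_{(s_1,\dots,s_{n-m})})\in\{0,1\}$ (where $(s_1,\dots,s_{n-m})$ is the empty string if $n\le m$).
   Context: Fix an integer $m\ge1$. Define integers $N(n)$ by $N(n)=1$ for $1-m\le n\le 0$ and $N(n)=N(n-1)+N(n-m)$ for $n\ge1$; write $\mathbb N_n=\{1,\dots,N(n)\}$ (so $\mathbb N_n=\{1\}$ for $n\le 0$, and $\mathbb N_{n-m}\subseteq\mathbb N_{n-1}$). Define vectors $\mathbf s_n^{(i)}\in\{+,-,\bigstar\}^n$ for $n\ge0$, $i\in\mathbb N_n$, recursively: $\mathbf s_0^{(1)}$ is the empty vector, and for $n\ge1$: $\mathbf s_n^{(j)}=(\mathbf s_{n-1}^{(j)},+)$ and $\mathbf s_n^{(j+N(n-1))}=(\mathbf s_{n-1}^{(j)},-)$ for $j\in\mathbb N_{n-m}$, while $\mathbf s_n^{(j)}=(\mathbf s_{n-1}^{(j)},\bigstar)$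 for $j\in\mathbb N_{n-1}\setminus\mathbb N_{n-m}$. Let $\mathcal S_n=\{\mathbf s_n^{(i)}:i\in\mathbb N_n\}$ for $n\ge1$. A B-DMC $V$ is a channel with input alphabet $\{0,1\}$, a finite output alphabet $\mathcal Y$ and transition probabilities $V(y|x)$. With base-2 logarithms and uniform input: $I(V)=\sum_{y}\sum_{x}\frac12V(y|x)\log\frac{V(y|x)}{\frac12V(y|0)+\frac12V(y|1)}$, $Z(V)=\sum_y\sqrt{V(y|0)V(y|1)}$, $J(V)=\log\frac{2}{1+Z(V)}$. For B-DMCs $V':\{0,1\}\to\mathcal Y_1$ and $V'':\{0,1\}\to\mathcal Y_2$ define $V'\boxminus V'':\{0,1\}\to\mathcal Y_1\times\mathcal Y_2$ by $(V'\boxminus V'')(y_1,y_2|x_1)=\sum_{x_2\in\{0,1\}}\frac12V'(y_1|x_1\oplus x_2)V''(y_2|x_2)$, and $V'\boxplus V'':\{0,1\}\to\mathcal Y_1\times\mathcal Y_2\times\{0,1\}$ by $(V'\boxplus V'')(y_1,y_2,x_1|x_2)=\frac12V'(y_1|x_1\oplus x_2)V''(y_2|x_2)$. Fix a B-DMC $W$. For every finite string $\mathbf t=(t_1,\dots,t_n)\in\{+,-,\bigstar\}^n$, $n\ge0$, define a B-DMC $W_{\mathbf t}$ recursively: $W_{\emptyset}=W$ for the empty string; for $n\ge1$ let $\mathbf t'=(t_1,\dots,t_{n-1})$ and $\mathbf t''=(t_1,\dots,t_{n-m})$ (the empty string if $n\le m$); then $W_{\mathbf t}=W_{\mathbf t''}\boxplus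 W_{\mathbf t'}$ if $t_n=+$, $W_{\mathbf t}=W_{\mathbf t''}\boxminus W_{\mathbf t'}$ if $t_n=-$, and $W_{\mathbf t}=W_{\mathbf t'}$ if $t_n=\bigstar$. *)

theory Defs
  imports Complex_Main
begin

text \<open>Nnat m k = N(k) for k >= 0 (N(0)=1; N(n)=1 for n <= 0).  The guard m = 0 only
  serves termination; the theorem assumes m >= 1.\<close>
fun Nnat :: "nat \<Rightarrow> nat \<Rightarrow> nat" where
  "Nnat m 0 = 1"
| "Nnat m (Suc k) = Nnat m k + (if Suc k \<le> m \<or> m = 0 then 1 else Nnat m (Suc k - m))"

definition NN :: "nat \<Rightarrow> int \<Rightarrow> nat" where
  "NN m n = (if n \<le> 0 then 1 else Nnat m (nat n))"

datatype sym = Plus | Minus | Star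

text \<open>svec m n i = s_n^(i), as a list of length n.\<close>
fun svec :: "nat \<Rightarrow> nat \<Rightarrow> nat \<Rightarrow> sym list" where
  "svec m 0 i = []"
| "svec m (Suc k) i =
     (if i \<le> NN m (int k) then
        (if i \<le> NN m (int (Suc k) - int m) then svec m k i @ [Plus] else svec m k i @ [Star])
      else svec m k (i - NN m (int k)) @ [Minus])"

definition Sset :: "nat \<Rightarrow> nat \<Rightarrow> sym list set" where
  "Sset m n = {svec m n i | i. i \<in> {1..NN m (int n)}}"

text \<open>Outputs of synthesized channels: base outputs, pairs (y1,y2), triples (y1,y2,x1).
  Input 0 = False, 1 = True, xor = inequality.\<close>
datatype 'y outp = Leaf 'y | Pr "'y outp" "'y outp" | PrB "'y outp" "'y outp" bool

type_synonym 'y chan = "'y outp set \<times> ('y outp \<Rightarrow> bool \<Rightarrow> real)"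

definition base_chan :: "'y set \<Rightarrow> ('y \<Rightarrow> bool \<Rightarrow> real) \<Rightarrow> 'y chan" where
  "base_chan Y W = (Leaf ` Y, \<lambda>ou x. case ou of Leaf y \<Rightarrow> W y x | _ \<Rightarrow> 0)"

definition boxminus :: "'y chan \<Rightarrow> 'y chan \<Rightarrow> 'y chan" where
  "boxminus V1 V2 =
     ((\<lambda>(a, b). Pr a b) ` (fst V1 \<times> fst V2),
      \<lambda>ou x1. case ou of
          Pr a b \<Rightarrow> (\<Sum>x2\<in>(UNIV::bool set). (1/2) * snd V1 a (x1 \<noteq> x2) * snd V2 b x2)
        | _ \<Rightarrow> 0)"

definition boxplus :: "'y chan \<Rightarrow> 'y chan \<Rightarrow> 'y chan" where
  "boxplus V1 V2 =
     ((\<lambda>(a, b, x1). PrB a b x1) ` (fst V1 \<times> fst V2 \<times> (UNIV::bool set)),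
      \<lambda>ou x2. case ou of
          PrB a b x1 \<Rightarrow> (1/2) * snd V1 a (x1 \<noteq> x2) * snd V2 b x2
        | _ \<Rightarrow> 0)"

definition Bhat :: "'y chan \<Rightarrow> real" where
  "Bhat V = (\<Sum>y\<in>fst V. sqrt (snd V y False * snd V y True))"

definition Jc :: "'y chan \<Rightarrow> real" where
  "Jc V = log 2 (2 / (1 + Bhat V))"

text \<open>W_t.  t' = butlast t, t'' = take (length t - m) t (max 1 m only for termination).\<close>
function chanW :: "nat \<Rightarrow> 'y chan \<Rightarrow> sym list \<Rightarrow> 'y chan" where
  "chanW m W t =
     (if t = [] then W
      else (let t1 = butlast t; t2 = take (length t - max 1 m) t in
            case last t of
              Plus \<Rightarrow> boxplus (chanW m W t2) (chanW m W t1)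
            | Minus \<Rightarrow> boxminus (chanW m W t2) (chanW m W t1)
            | Star \<Rightarrow> chanW m W t1))"
  by pat_completeness auto
termination
  by (relation "measure (\<lambda>(m, W, t). length t)") auto

definition EJ :: "nat \<Rightarrow> 'y chan \<Rightarrow> int \<Rightarrow> real" where
  "EJ m W n = (if n \<le> 0 then Jc W
     else (1 / real (NN m n)) * (\<Sum>s\<in>Sset m (nat n). Jc (chanW m W s)))"

definition is_bdmc :: "'y set \<Rightarrow> ('y \<Rightarrow> bool \<Rightarrow> real) \<Rightarrow> bool" where
  "is_bdmc Y W \<longleftrightarrow> finite Y \<and> (\<forall>y\<in>Y. \<forall>x. W y x \<ge> 0) \<and> (\<forall>x. (\<Sum>y\<in>Y. W y x) = 1)"

end

theory Submission
  imports Defs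
begin


definition chv :: "'y chan \<Rightarrow> bool" where
  "chv V \<longleftrightarrow> finite (fst V) \<and> (\<forall>y\<in>fst V. \<forall>x. snd V y x \<ge> 0) \<and> (\<forall>x. (\<Sum>y\<in>fst V. snd V y x) = 1)"

lemma sum_boxplus:
  "(\<Sum>ou\<in>fst (boxplus A B). g ou) = (\<Sum>a\<in>fst A. \<Sum>b\<in>fst B. \<Sum>x1\<in>UNIV. g (PrB a b x1))"
proof -
  have inj: "inj_on (\<lambda>(a, b, x1). PrB a b x1) (fst A \<times> fst B \<times> (UNIV::bool set))"
    by (auto simp: inj_on_def)
  have "(\<Sum>ou\<in>fst (boxplus A B). g ou) = (\<Sum>p\<in>fst A \<times> fst B \<times> (UNIV::bool set). g (case p of (a, b, x1) \<Rightarrow> PrB a b x1))"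
    unfolding boxplus_def using sum.reindex[OF inj] by (simp add: comp_def)
  also have "\<dots> = (\<Sum>a\<in>fst A. \<Sum>b\<in>fst B. \<Sum>x1\<in>UNIV. g (PrB a b x1))"
    by (simp add: sum.cartesian_product split_def)
  finally show ?thesis .
qed

lemma sum_boxminus:
  "(\<Sum>ou\<in>fst (boxminus A B). g ou) = (\<Sum>a\<in>fst A. \<Sum>b\<in>fst B. g (Pr a b))"
proof -
  have inj: "inj_on (\<lambda>(a, b). Pr a b) (fst A \<times> fst B)"
    by (auto simp: inj_on_def)
  have "(\<Sum>ou\<in>fst (boxminus A B). g ou) = (\<Sum>p\<in>fst A \<times> fst B. g (case p of (a, b) \<Rightarrow> Pr a b))"
    unfolding boxminus_def using sum.reindex[OF inj] by (simp add: comp_def)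
  also have "\<dots> = (\<Sum>a\<in>fst A. \<Sum>b\<in>fst B. g (Pr a b))"
    by (simp add: sum.cartesian_product split_def)
  finally show ?thesis .
qed

lemma snd_boxplus[simp]: "snd (boxplus A B) (PrB a b x1) x2 = 1/2 * snd A a (x1 \<noteq> x2) * snd B b x2"
  by (simp add: boxplus_def)
lemma snd_boxminus[simp]: "snd (boxminus A B) (Pr a b) x1 = (\<Sum>x2\<in>UNIV. 1/2 * snd A a (x1 \<noteq> x2) * snd B b x2)"
  by (simp add: boxminus_def)


lemma sumB_const: "(\<Sum>b\<in>S. (c::real) * f b) = c * (\<Sum>b\<in>S. f b)" by (simp add: sum_distrib_left)

lemma chv_boxplus: assumes "chv A" "chv B" shows "chv (boxplus A B)"
proof -
  have f: "finite (fst (boxplus A B))" using assms by (simp add: chv_def boxplus_def)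
  have n: "\<forall>y\<in>fst (boxplus A B). \<forall>x. snd (boxplus A B) y x \<ge> 0"
    using assms by (auto simp: chv_def boxplus_def)
  have sA: "\<And>x. (\<Sum>a\<in>fst A. snd A a x) = 1" and sB: "\<And>x. (\<Sum>a\<in>fst B. snd B a x) = 1"
    using assms by (auto simp: chv_def)
  have s: "(\<Sum>y\<in>fst (boxplus A B). snd (boxplus A B) y x) = 1" for x
    unfolding sum_boxplus by (cases x) (simp_all add: UNIV_bool sum.distrib sumB_const sA sB sum_divide_distrib[symmetric])
  show ?thesis using f n s by (simp add: chv_def)
qed

lemma chv_boxminus: assumes "chv A" "chv B" shows "chv (boxminus A B)"
proof -
  have f: "finite (fst (boxminus A B))" using assms by (simp add: chv_def boxminus_def)
  have n: "\<forall>y\<in>fst (boxminus A B). \<forall>x. snd (boxminus A B) y x \<ge> 0"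
    using assms by (auto simp: chv_def boxminus_def intro!: sum_nonneg)
  have sA: "\<And>x. (\<Sum>a\<in>fst A. snd A a x) = 1" and sB: "\<And>x. (\<Sum>a\<in>fst B. snd B a x) = 1"
    using assms by (auto simp: chv_def)
  have s: "(\<Sum>y\<in>fst (boxminus A B). snd (boxminus A B) y x) = 1" for x
    unfolding sum_boxminus by (cases x) (simp_all add: UNIV_bool sum.distrib sumB_const sA sB sum_divide_distrib[symmetric])
  show ?thesis using f n s by (simp add: chv_def)
qed



lemma sqrt_pt: "sqrt ((1/2)^2 * (X * Y)) = 1/2 * sqrt X * sqrt Y"
  unfolding real_sqrt_mult by simp

lemma Bhat_boxplus: "Bhat (boxplus A B) = Bhat A * Bhat B"
proof -
  have pt: "(\<Sum>x1\<in>UNIV. sqrt (snd (boxplus A B) (PrB a b x1) False * snd (boxplus A B) (PrB a b x1) True))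
     = sqrt (snd A a False * snd A a True) * sqrt (snd B b False * snd B b True)" for a b
  proof -
    have h1: "snd (boxplus A B) (PrB a b True) False * snd (boxplus A B) (PrB a b True) True
       = (1/2)^2 * ((snd A a False * snd A a True) * (snd B b False * snd B b True))"
      by (simp add: power2_eq_square mult_ac)
    have h2: "snd (boxplus A B) (PrB a b False) False * snd (boxplus A B) (PrB a b False) True
       = (1/2)^2 * ((snd A a False * snd A a True) * (snd B b False * snd B b True))"
      by (simp add: power2_eq_square mult_ac)
    have "(\<Sum>x1\<in>UNIV. sqrt (snd (boxplus A B) (PrB a b x1) False * snd (boxplus A B) (PrB a b x1) True))
      = sqrt (snd (boxplus A B) (PrB a b False) False * snd (boxplus A B) (PrB a b False) True)
      + sqrt (snd (boxplus A B) (PrB a b True) False * snd (boxplus A B) (PrB a b True) True)"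
      by (simp add: UNIV_bool del: snd_boxplus)
    also have "\<dots> = sqrt (snd A a False * snd A a True) * sqrt (snd B b False * snd B b True)"
      unfolding h1 h2 sqrt_pt by simp
    finally show ?thesis .
  qed
  have "Bhat (boxplus A B) = (\<Sum>a\<in>fst A. \<Sum>b\<in>fst B. sqrt (snd A a False * snd A a True) * sqrt (snd B b False * snd B b True))"
    unfolding Bhat_def sum_boxplus pt ..
  also have "\<dots> = Bhat A * Bhat B" by (simp add: Bhat_def sum_product)
  finally show ?thesis .
qed

lemma Bhat_nonneg: "chv A \<Longrightarrow> Bhat A \<ge> 0" unfolding Bhat_def chv_def by (auto intro!: sum_nonneg)

lemma Bhat_le1: assumes "chv A" shows "Bhat A \<le> 1"
proof -
  have "Bhat A \<le> (\<Sum>y\<in>fst A. (snd A y False + snd A y True) / 2)"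
    unfolding Bhat_def using assms by (intro sum_mono) (metis chv_def arith_geo_mean_sqrt)
  also have "\<dots> = 1" using assms by (simp add: chv_def sum_divide_distrib[symmetric] sum.distrib)
  finally show ?thesis .
qed


lemma core_ineq:
  fixes a b c d :: real
  assumes "a \<ge> 0" "b \<ge> 0" "c \<ge> 0" "d \<ge> 0"
  shows "sqrt ((a^2*b^2 + d^2*c^2) * (d^2*b^2 + a^2*c^2)) \<le> a*d*(b^2+c^2) + b*c*(a^2+d^2) - 2*a*b*c*d"
proof -
  let ?R = "a*d*(b^2+c^2) + b*c*(a^2+d^2) - 2*a*b*c*d"
  have R: "?R = a*d*(b-c)^2 + b*c*(a^2+d^2)" by (simp add: algebra_simps power2_eq_square)
  have R0: "?R \<ge> 0" unfolding R using assms by (intro add_nonneg_nonneg mult_nonneg_nonneg) auto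
  have id: "?R^2 - (a^2*b^2 + d^2*c^2) * (d^2*b^2 + a^2*c^2) = 2*a*b*c*d*(a-d)^2*(b-c)^2"
    by (simp add: algebra_simps power2_eq_square)
  have "2*a*b*c*d*(a-d)^2*(b-c)^2 \<ge> 0" using assms by simp
  hence "(a^2*b^2 + d^2*c^2) * (d^2*b^2 + a^2*c^2) \<le> ?R^2" using id by linarith
  hence "sqrt ((a^2*b^2 + d^2*c^2) * (d^2*b^2 + a^2*c^2)) \<le> sqrt (?R^2)" by (rule real_sqrt_le_mono)
  thus ?thesis using R0 by simp
qed

lemma pt_ineq:
  fixes al de be ga :: real
  assumes "al \<ge> 0" "be \<ge> 0" "ga \<ge> 0" "de \<ge> 0"
  shows "sqrt ((1/2*al*be + 1/2*de*ga) * (1/2*de*be + 1/2*al*ga))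
    \<le> 1/2 * (sqrt (al*de) * (be+ga) + sqrt (be*ga) * (al+de)) - sqrt (al*de) * sqrt (be*ga)"
proof -
  define a where "a = sqrt al"
  define b where "b = sqrt be"
  define c where "c = sqrt ga"
  define d where "d = sqrt de"
  have ge: "a \<ge> 0" "b \<ge> 0" "c \<ge> 0" "d \<ge> 0" using assms by (auto simp: a_def b_def c_def d_def)
  have sq: "al = a^2" "be = b^2" "ga = c^2" "de = d^2" using assms by (auto simp: a_def b_def c_def d_def)
  have e1: "(1/2*al*be + 1/2*de*ga) * (1/2*de*be + 1/2*al*ga) = (1/2)^2 * ((a^2*b^2 + d^2*c^2) * (d^2*b^2 + a^2*c^2))"
    unfolding sq by (simp add: algebra_simps power2_eq_square)
  have s1: "sqrt (al*de) = a*d" unfolding sq using ge by (simp add: real_sqrt_mult)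
  have s2: "sqrt (be*ga) = b*c" unfolding sq using ge by (simp add: real_sqrt_mult)
  have "sqrt ((1/2)^2 * ((a^2*b^2 + d^2*c^2) * (d^2*b^2 + a^2*c^2))) = 1/2 * sqrt ((a^2*b^2 + d^2*c^2) * (d^2*b^2 + a^2*c^2))"
    unfolding real_sqrt_mult by simp
  also have "\<dots> \<le> 1/2 * (a*d*(b^2+c^2) + b*c*(a^2+d^2) - 2*a*b*c*d)"
    using core_ineq[OF ge(1,2,3,4)] by simp
  finally show ?thesis unfolding e1 s1 s2 unfolding sq by (simp add: algebra_simps)
qed

lemma sum4: "(\<Sum>a\<in>S. \<Sum>b\<in>T. (p a * q b + r a * t b - u a * v b)) = sum p S * sum q T + sum r S * sum t T - sum u S * sum v T"
  for p q r t u v :: "_ \<Rightarrow> real"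
  by (simp add: sum_product sum.distrib sum_subtractf)

lemma Bhat_boxminus: assumes A: "chv A" and B: "chv B"
  shows "Bhat (boxminus A B) \<le> Bhat A + Bhat B - Bhat A * Bhat B"
proof -
  let ?zA = "\<lambda>a. sqrt (snd A a False * snd A a True)"
  let ?zB = "\<lambda>b. sqrt (snd B b False * snd B b True)"
  have nA: "\<And>a x. a \<in> fst A \<Longrightarrow> snd A a x \<ge> 0" and nB: "\<And>a x. a \<in> fst B \<Longrightarrow> snd B a x \<ge> 0"
    using A B by (auto simp: chv_def)
  have sA: "\<And>x. (\<Sum>a\<in>fst A. snd A a x) = 1" and sB: "\<And>x. (\<Sum>a\<in>fst B. snd B a x) = 1"
    using A B by (auto simp: chv_def)
  have "Bhat (boxminus A B) = (\<Sum>a\<in>fst A. \<Sum>b\<in>fst B. sqrt (snd (boxminus A B) (Pr a b) False * snd (boxminus A B) (Pr a b) True))"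
    unfolding Bhat_def sum_boxminus ..
  also have "\<dots> \<le> (\<Sum>a\<in>fst A. \<Sum>b\<in>fst B. (?zA a * (1/2 * (snd B b False + snd B b True)) + (1/2 * (snd A a False + snd A a True)) * ?zB b - ?zA a * ?zB b))"
  proof (intro sum_mono)
    fix a b assume a: "a \<in> fst A" and b: "b \<in> fst B"
    have "sqrt (snd (boxminus A B) (Pr a b) False * snd (boxminus A B) (Pr a b) True)
      = sqrt ((1/2*snd A a False*snd B b False + 1/2*snd A a True*snd B b True) * (1/2*snd A a True*snd B b False + 1/2*snd A a False*snd B b True))"
      by (simp add: UNIV_bool)
    also have "\<dots> \<le> 1/2 * (?zA a * (snd B b False + snd B b True) + ?zB b * (snd A a False + snd A a True)) - ?zA a * ?zB b"
      by (rule pt_ineq) (auto intro: nA[OF a] nB[OF b])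
    also have "\<dots> = ?zA a * (1/2 * (snd B b False + snd B b True)) + (1/2 * (snd A a False + snd A a True)) * ?zB b - ?zA a * ?zB b"
      by (simp add: algebra_simps)
    finally show "sqrt (snd (boxminus A B) (Pr a b) False * snd (boxminus A B) (Pr a b) True) \<le> \<dots>" .
  qed
  also have "\<dots> = Bhat A * 1 + 1 * Bhat B - Bhat A * Bhat B"
    unfolding sum4 Bhat_def by (simp add: sum.distrib sA sB sum_divide_distrib[symmetric])
  finally show ?thesis by simp
qed


lemma J_abs:
  fixes x y zm :: real
  assumes x: "0 \<le> x" "x \<le> 1" and y: "0 \<le> y" "y \<le> 1" and z: "0 \<le> zm" "zm \<le> x + y - x*y"
  shows "log 2 (2/(1+x*y)) + log 2 (2/(1+zm)) \<ge> log 2 (2/(1+x)) + log 2 (2/(1+y))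
    \<and> (log 2 (2/(1+x*y)) + log 2 (2/(1+zm)) = log 2 (2/(1+x)) + log 2 (2/(1+y)) \<longrightarrow> x \<in> {0,1} \<or> y \<in> {0,1})"
proof -
  have f: "log 2 (2/(1+t)) = 1 - log 2 (1+t)" if "t \<ge> 0" for t :: real
    using that by (simp add: log_divide_pos)
  have xy0: "x*y \<ge> 0" using x y by simp
  have L: "log 2 (2/(1+x*y)) + log 2 (2/(1+zm)) = 2 - log 2 ((1+x*y)*(1+zm))"
    using f[OF xy0] f[OF z(1)] xy0 z by (simp add: log_mult_pos)
  have R: "log 2 (2/(1+x)) + log 2 (2/(1+y)) = 2 - log 2 ((1+x)*(1+y))"
    using f[OF x(1)] f[OF y(1)] x y by (simp add: log_mult_pos)
  have Q: "(1+x*y)*(1+zm) \<le> (1+x)*(1+y) - x*y*(1-x)*(1-y)"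
  proof -
    have "(1+x*y)*(1+zm) \<le> (1+x*y)*(1 + (x+y-x*y))" using z xy0 by (intro mult_left_mono) auto
    also have "\<dots> = (1+x)*(1+y) - x*y*(1-x)*(1-y)" by (simp add: algebra_simps)
    finally show ?thesis .
  qed
  have D: "x*y*(1-x)*(1-y) \<ge> 0" using x y by simp
  have pos: "(1+x*y)*(1+zm) > 0" using xy0 z by (simp add: add_pos_nonneg)
  have le: "(1+x*y)*(1+zm) \<le> (1+x)*(1+y)" using Q D by linarith
  have ineq: "log 2 ((1+x*y)*(1+zm)) \<le> log 2 ((1+x)*(1+y))"
    using le pos by simp
  have eq: "x \<in> {0,1} \<or> y \<in> {0,1}" if "log 2 ((1+x*y)*(1+zm)) = log 2 ((1+x)*(1+y))"
  proof -
    have "\<not> (1+x*y)*(1+zm) < (1+x)*(1+y)" using that log_less[of 2 "(1+x*y)*(1+zm)" "(1+x)*(1+y)"] pos by auto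
    hence "x*y*(1-x)*(1-y) = 0" using Q D by linarith
    thus ?thesis by auto
  qed
  show ?thesis unfolding L R using ineq eq by auto
qed

lemma Jc0: "Bhat A = 0 \<Longrightarrow> Jc A = 1" by (simp add: Jc_def)
lemma Jc1: "Bhat A = 1 \<Longrightarrow> Jc A = 0" by (simp add: Jc_def)

lemma J_chan:
  assumes A: "chv A" and B: "chv B"
  shows "Jc (boxplus A B) + Jc (boxminus A B) \<ge> Jc A + Jc B
    \<and> (Jc (boxplus A B) + Jc (boxminus A B) = Jc A + Jc B \<longrightarrow> Jc A \<in> {0,1} \<or> Jc B \<in> {0,1})"
proof -
  note h = J_abs[OF Bhat_nonneg[OF A] Bhat_le1[OF A] Bhat_nonneg[OF B] Bhat_le1[OF B]
      Bhat_nonneg[OF chv_boxminus[OF A B]] Bhat_boxminus[OF A B]]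
  show ?thesis using h unfolding Jc_def Bhat_boxplus using Jc0 Jc1 unfolding Jc_def by auto
qed

declare chanW.simps[simp del]
lemma chanW_Nil[simp]: "chanW m W [] = W" by (subst chanW.simps) simp

lemma chanW_snoc: assumes "m \<ge> 1" shows
  "chanW m W (t @ [x]) = (case x of
       Plus \<Rightarrow> boxplus (chanW m W (take (Suc (length t) - m) t)) (chanW m W t)
     | Minus \<Rightarrow> boxminus (chanW m W (take (Suc (length t) - m) t)) (chanW m W t)
     | Star \<Rightarrow> chanW m W t)"
proof -
  have mm: "max (Suc 0) m = m" using assms by simp
  have tk: "take (Suc (length t) - m) (t @ [x]) = take (Suc (length t) - m) t"
    using assms by (simp add: take_append)
  have s0: "Suc 0 - m = 0" using assms by simp
  show ?thesis by (subst chanW.simps) (simp add: mm s0 Let_def)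
qed

lemma chv_chanW: assumes "chv W" shows "chv (chanW m W t)"
proof (induction t rule: measure_induct_rule[where f=length])
  case (less t)
  show ?case
  proof (cases "t = []")
    case True thus ?thesis using assms by simp
  next
    case False
    have l1: "length (butlast t) < length t" using False by simp
    have l2: "length (take (length t - max 1 m) t) < length t" using False by simp
    note I1 = less[OF l1] and I2 = less[OF l2]
    show ?thesis using False I1 I2
      by (subst chanW.simps) (simp add: Let_def chv_boxplus chv_boxminus split: sym.split)
  qed
qed



lemma Nnat_pos: "Nnat m k \<ge> 1" by (induction k) auto

lemma Nnat_Suc: "m \<ge> 1 \<Longrightarrow> Nnat m (Suc k) = Nnat m k + Nnat m (Suc k - m)"
  by auto

lemma Nnat_mono: "a \<le> b \<Longrightarrow> Nnat m a \<le> Nnat m b"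
  by (induction b) (auto simp: le_Suc_eq)

lemma NN_nat[simp]: "NN m (int k) = Nnat m k" by (simp add: NN_def)

lemma NN_diff: "NN m (int n - int m) = Nnat m (n - m)"
  by (cases "n \<le> m") (auto simp: NN_def nat_diff_distrib)

lemma svec_Suc: assumes "m \<ge> 1" shows
  "svec m (Suc k) i = (if i \<le> Nnat m k then (if i \<le> Nnat m (Suc k - m) then svec m k i @ [Plus] else svec m k i @ [Star])
      else svec m k (i - Nnat m k) @ [Minus])"
proof -
  have "NN m (int (Suc k) - int m) = Nnat m (Suc k - m)" by (rule NN_diff)
  thus ?thesis by simp
qed

lemma length_svec[simp]: "length (svec m n i) = n" by (induction n arbitrary: i) auto

declare svec.simps(2)[simp del]

lemma M_le: "m \<ge> 1 \<Longrightarrow> Nnat m (Suc k - m) \<le> Nnat m k"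
  by (rule Nnat_mono) auto

lemma svec_take: assumes "m \<ge> 1" shows "i \<le> Nnat m k \<Longrightarrow> k \<le> n \<Longrightarrow> take k (svec m n i) = svec m k i"
proof (induction n)
  case 0 thus ?case by simp
next
  case (Suc n)
  show ?case
  proof (cases "k = Suc n")
    case True thus ?thesis by simp
  next
    case False
    hence kn: "k \<le> n" using Suc by simp
    have "i \<le> Nnat m n" using Suc.prems Nnat_mono[OF kn, of m] by simp
    hence "\<exists>x. svec m (Suc n) i = svec m n i @ [x]" using svec_Suc[OF assms] by auto
    then obtain x where "svec m (Suc n) i = svec m n i @ [x]" by blast
    thus ?thesis using Suc.IH[OF Suc.prems(1) kn] kn by simp
  qed
qed

lemma svec_inj: assumes "m \<ge> 1" shows "inj_on (svec m n) {1..Nnat m n}"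
proof (induction n)
  case 0 thus ?case by simp
next
  case (Suc k)
  define g where "g i = (if i \<le> Nnat m k then i else i - Nnat m k)" for i
  define tg where "tg i = (if i \<le> Nnat m k then (if i \<le> Nnat m (Suc k - m) then Plus else Star) else Minus)" for i
  have rep: "svec m (Suc k) i = svec m k (g i) @ [tg i]" for i
    using svec_Suc[OF assms] by (simp add: g_def tg_def)
  have gr: "g i \<in> {1..Nnat m k}" if "i \<in> {1..Nnat m (Suc k)}" for i
    using that M_le[OF assms, of k] Nnat_Suc[OF assms, of k] by (auto simp: g_def)
  show ?case
  proof (rule inj_onI)
    fix i j assume i: "i \<in> {1..Nnat m (Suc k)}" and j: "j \<in> {1..Nnat m (Suc k)}"
      and e: "svec m (Suc k) i = svec m (Suc k) j"
    hence "svec m k (g i) = svec m k (g j)" and t: "tg i = tg j" unfolding rep by auto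
    hence "g i = g j" using Suc.IH gr[OF i] gr[OF j] by (auto dest: inj_onD)
    moreover have "(i \<le> Nnat m k) = (j \<le> Nnat m k)" using t by (auto simp: tg_def split: if_splits)
    ultimately show "i = j" by (auto simp: g_def split: if_splits)
  qed
qed

lemma Sset_img: "Sset m n = svec m n ` {1..Nnat m n}"
  unfolding Sset_def by auto

lemma sum_EJ: assumes "m \<ge> 1"
  shows "real (Nnat m k) * EJ m V (int k) = (\<Sum>i\<in>{1..Nnat m k}. Jc (chanW m V (svec m k i)))"
proof (cases "k = 0")
  case True thus ?thesis by (simp add: EJ_def)
next
  case False
  have "(\<Sum>s\<in>Sset m k. Jc (chanW m V s)) = (\<Sum>i\<in>{1..Nnat m k}. Jc (chanW m V (svec m k i)))"
    unfolding Sset_img by (subst sum.reindex[OF svec_inj[OF assms]]) (simp add: comp_def)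
  thus ?thesis using False Nnat_pos[of m k] by (simp add: EJ_def)
qed


lemma chv_base: assumes "is_bdmc Y W" shows "chv (base_chan Y W)"
proof -
  have inj: "inj_on Leaf Y" by (simp add: inj_on_def)
  show ?thesis using assms unfolding chv_def base_chan_def is_bdmc_def
    by (auto simp: sum.reindex[OF inj])
qed

lemma EJ_diff: "EJ m V (int n - int m) = EJ m V (int (n - m))"
  by (cases "n \<le> m") (auto simp: EJ_def of_nat_diff)

theorem lemma1:
  fixes m n :: nat and Y :: "'y set" and W :: "'y \<Rightarrow> bool \<Rightarrow> real"
  assumes "m \<ge> 1" and "is_bdmc Y W" and "n \<ge> 1"
  defines "V \<equiv> base_chan Y W"
  defines "\<mu> \<equiv> real (NN m (int n - 1)) / real (NN m (int n))"
  shows "EJ m V (int n) \<ge> \<mu> * EJ m V (int n - 1) + (1 - \<mu>) * EJ m V (int n - int m)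
    \<and> (EJ m V (int n) = \<mu> * EJ m V (int n - 1) + (1 - \<mu>) * EJ m V (int n - int m) \<longrightarrow>
        (\<forall>s\<in>Sset m n. last s \<in> {Plus, Minus} \<longrightarrow>
            Jc (chanW m V (take (n - 1) s)) \<in> {0, 1} \<or> Jc (chanW m V (take (n - m) s)) \<in> {0, 1}))"
proof -
  have m1: "m \<ge> 1" by fact
  obtain k where nk: "n = Suc k" using assms(3) by (cases n) auto
  have cV: "chv V" unfolding V_def by (rule chv_base[OF assms(2)])
  define N where "N = Nnat m k"
  define M where "M = Nnat m (Suc k - m)"
  define F where "F s = Jc (chanW m V s)" for s
  define P where "P i = F (svec m k i @ [Plus])" for i
  define Q where "Q i = F (svec m k i @ [Minus])" for i
  define G where "G i = F (svec m k i)" for i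
  define H where "H i = F (svec m (Suc k - m) i)" for i
  have NS: "Nnat m (Suc k) = N + M" unfolding N_def M_def using Nnat_Suc[OF m1] by simp
  have MleN: "M \<le> N" unfolding N_def M_def by (rule M_le[OF m1])
  have Npos: "N \<ge> 1" and Mpos: "M \<ge> 1" unfolding N_def M_def using Nnat_pos by auto
  have pm: "P i + Q i \<ge> G i + H i \<and> (P i + Q i = G i + H i \<longrightarrow> H i \<in> {0,1} \<or> G i \<in> {0,1})"
    if i: "i \<in> {1..M}" for i
  proof -
    have tk: "take (Suc k - m) (svec m k i) = svec m (Suc k - m) i"
      using i m1 by (intro svec_take[OF m1]) (auto simp: M_def)
    have "P i = Jc (boxplus (chanW m V (svec m (Suc k - m) i)) (chanW m V (svec m k i)))"
      unfolding P_def F_def chanW_snoc[OF m1] by (simp add: tk)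
    moreover have "Q i = Jc (boxminus (chanW m V (svec m (Suc k - m) i)) (chanW m V (svec m k i)))"
      unfolding Q_def F_def chanW_snoc[OF m1] by (simp add: tk)
    moreover note J_chan[OF chv_chanW[OF cV, where m=m and t="svec m (Suc k - m) i"] chv_chanW[OF cV, where m=m and t="svec m k i"]]
    ultimately show ?thesis
      unfolding G_def H_def F_def by (simp add: add.commute disj_commute)
  qed
  define D where "D i = P i + Q i - G i - H i" for i
  have D0: "D i \<ge> 0" if "i \<in> {1..M}" for i using pm[OF that] by (simp add: D_def)
  define S where "S = (\<Sum>i\<in>{1..N+M}. F (svec m (Suc k) i))"
  have S1: "(\<Sum>i\<in>{N+1..N+M}. F (svec m (Suc k) i)) = (\<Sum>i\<in>{1..M}. Q i)"
  proof -
    have "(\<Sum>i\<in>{N+1..N+M}. F (svec m (Suc k) i)) = (\<Sum>i\<in>{1..M}. F (svec m (Suc k) (i + N)))"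
      using sum.shift_bounds_cl_nat_ivl[of "\<lambda>i. F (svec m (Suc k) i)" 1 N M] by (simp add: add.commute)
    also have "\<dots> = (\<Sum>i\<in>{1..M}. Q i)"
      by (intro sum.cong refl) (simp add: svec_Suc[OF m1] Q_def N_def)
    finally show ?thesis .
  qed
  have S2: "(\<Sum>i\<in>{1..N}. F (svec m (Suc k) i)) = (\<Sum>i\<in>{1..M}. P i) + (\<Sum>i\<in>{M+1..N}. G i)"
  proof -
    have NMe: "N = M + (N - M)" using MleN by simp
    have "(\<Sum>i\<in>{1..N}. F (svec m (Suc k) i)) = (\<Sum>i\<in>{1..M}. F (svec m (Suc k) i)) + (\<Sum>i\<in>{M+1..N}. F (svec m (Suc k) i))"
      using sum.ub_add_nat[of 1 M "\<lambda>i. F (svec m (Suc k) i)" "N - M"] NMe by simp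
    also have "(\<Sum>i\<in>{1..M}. F (svec m (Suc k) i)) = (\<Sum>i\<in>{1..M}. P i)"
      using MleN by (intro sum.cong refl) (auto simp: svec_Suc[OF m1] P_def N_def M_def)
    also have "(\<Sum>i\<in>{M+1..N}. F (svec m (Suc k) i)) = (\<Sum>i\<in>{M+1..N}. G i)"
      by (intro sum.cong refl) (auto simp: svec_Suc[OF m1] G_def N_def M_def F_def chanW_snoc[OF m1])
    finally show ?thesis .
  qed
  have SS: "S = (\<Sum>i\<in>{1..M}. P i + Q i) + (\<Sum>i\<in>{M+1..N}. G i)"
  proof -
    have "S = (\<Sum>i\<in>{1..N}. F (svec m (Suc k) i)) + (\<Sum>i\<in>{N+1..N+M}. F (svec m (Suc k) i))"
      unfolding S_def using sum.ub_add_nat[of 1 N "\<lambda>i. F (svec m (Suc k) i)" M] by simp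
    thus ?thesis using S1 S2 by (simp add: sum.distrib)
  qed
  have GS: "(\<Sum>i\<in>{1..N}. G i) = (\<Sum>i\<in>{1..M}. G i) + (\<Sum>i\<in>{M+1..N}. G i)"
  proof -
    have NMe: "N = M + (N - M)" using MleN by simp
    show ?thesis using sum.ub_add_nat[of 1 M G "N - M"] NMe by simp
  qed
  have diff: "S - ((\<Sum>i\<in>{1..N}. G i) + (\<Sum>i\<in>{1..M}. H i)) = (\<Sum>i\<in>{1..M}. D i)"
    unfolding SS GS D_def by (simp add: sum.distrib sum_subtractf)
  have Dn: "(\<Sum>i\<in>{1..M}. D i) \<ge> 0" using D0 by (intro sum_nonneg) auto
  have En: "real (N + M) * EJ m V (int n) = S"
    using sum_EJ[OF m1, of "Suc k" V] unfolding nk NS S_def F_def by simp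
  have Ek: "real N * EJ m V (int n - 1) = (\<Sum>i\<in>{1..N}. G i)"
    using sum_EJ[OF m1, of k V] unfolding nk N_def G_def F_def by simp
  have Em: "real M * EJ m V (int n - int m) = (\<Sum>i\<in>{1..M}. H i)"
    using sum_EJ[OF m1, of "Suc k - m" V] unfolding nk EJ_diff M_def H_def F_def by simp
  have a1: "NN m (int n) = N + M" unfolding nk NN_nat NS ..
  have a2: "NN m (int n - 1) = N"
  proof -
    have "int n - 1 = int k" using nk by simp
    thus ?thesis by (simp add: N_def)
  qed
  have mu: "\<mu> = real N / real (N + M)" unfolding \<mu>_def a1 a2 ..
  have rhs: "\<mu> * EJ m V (int n - 1) + (1 - \<mu>) * EJ m V (int n - int m)
      = ((\<Sum>i\<in>{1..N}. G i) + (\<Sum>i\<in>{1..M}. H i)) / real (N + M)"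
  proof -
    have e1: "EJ m V (int n - 1) = (\<Sum>i\<in>{1..N}. G i) / real N" using Ek Npos by (simp add: field_simps)
    have e2: "EJ m V (int n - int m) = (\<Sum>i\<in>{1..M}. H i) / real M" using Em Mpos by (simp add: field_simps)
    have e3: "1 - \<mu> = real M / real (N + M)" unfolding mu using Npos by (simp add: field_simps)
    have pN: "real N > 0" and pM: "real M > 0" using Npos Mpos by auto
    have gen: "a/(a+b) * (g/a) + b/(a+b) * (h/b) = (g+h)/(a+b)" if "a > 0" "b > 0" for a b g h :: real
    proof -
      have "a/(a+b) * (g/a) = g/(a+b)" using that by simp
      moreover have "b/(a+b) * (h/b) = h/(a+b)" using that by simp
      ultimately show ?thesis by (simp add: add_divide_distrib)
    qed
    show ?thesis unfolding e1 e2 e3 unfolding mu using gen[OF pN pM] by simp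
  qed
  have lhs: "EJ m V (int n) = S / real (N + M)" using En Npos by (simp add: field_simps)
  have part1: "EJ m V (int n) \<ge> \<mu> * EJ m V (int n - 1) + (1 - \<mu>) * EJ m V (int n - int m)"
    unfolding rhs lhs using diff Dn by (intro divide_right_mono) auto
  have part2: "\<forall>s\<in>Sset m n. last s \<in> {Plus, Minus} \<longrightarrow>
            Jc (chanW m V (take (n - 1) s)) \<in> {0, 1} \<or> Jc (chanW m V (take (n - m) s)) \<in> {0, 1}"
    if eq: "EJ m V (int n) = \<mu> * EJ m V (int n - 1) + (1 - \<mu>) * EJ m V (int n - int m)"
  proof -
    have "S = (\<Sum>i\<in>{1..N}. G i) + (\<Sum>i\<in>{1..M}. H i)"
      using eq unfolding rhs lhs using Npos by (simp add: field_simps)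
    hence "(\<Sum>i\<in>{1..M}. D i) = 0" using diff by simp
    hence Dz: "\<forall>i\<in>{1..M}. D i = 0" using D0 by (subst (asm) sum_nonneg_eq_0_iff) auto
    have key: "H j \<in> {0,1} \<or> G j \<in> {0,1}" if "j \<in> {1..M}" for j
    proof -
      have "D j = 0" using Dz that by blast
      hence "P j + Q j = G j + H j" by (simp add: D_def)
      thus ?thesis using pm[OF that] by blast
    qed
    show ?thesis
    proof (intro ballI impI)
      fix s assume "s \<in> Sset m n" and ls: "last s \<in> {Plus, Minus}"
      then obtain i where i: "i \<in> {1..N+M}" and s: "s = svec m (Suc k) i"
        unfolding Sset_img nk NS by auto
      obtain j where j: "j \<in> {1..M}" and sj: "\<exists>x. s = svec m k j @ [x]"
      proof (cases "i \<le> N")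
        case True
        hence "i \<le> M" using ls unfolding s by (auto simp: svec_Suc[OF m1] N_def M_def split: if_splits)
        thus ?thesis using that[of i] i True by (auto simp: s svec_Suc[OF m1] N_def M_def)
      next
        case False
        have "i - N \<in> {1..M}" using False i by auto
        moreover have "s = svec m k (i - N) @ [Minus]" using False by (simp add: s svec_Suc[OF m1] N_def)
        ultimately show ?thesis using that by blast
      qed
      then obtain x where sx: "s = svec m k j @ [x]" by blast
      have t1: "take (n - 1) s = svec m k j" unfolding sx nk by simp
      have t2: "take (n - m) s = svec m (Suc k - m) j"
        unfolding sx nk using m1 j by (simp add: take_append svec_take[OF m1] M_def)
      show "Jc (chanW m V (take (n - 1) s)) \<in> {0, 1} \<or> Jc (chanW m V (take (n - m) s)) \<in> {0, 1}"
        using key[OF j] unfolding t1 t2 G_def H_def F_def by auto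
    qed
  qed
  show ?thesis using part1 part2 by blast
qed


end
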